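(* Let $A$ be a set with a ternary operation $p\colon A^3\to A$ and two constants $0,1\in A$ satisfying, for all $a,b,c,b_1,b_2,b_3\in A$: (T1) $p(0,a,1)=a$; (T2) $p(a,b,a)=a$; (T3) $p(a,p(b_1,b_2,b_3),c)=p(p(a,b_1,c),b_2,p(a,b_3,c))$; (T4) $p(a,0,b)=a=p(b,1,a)$. Define $\bar{a}=p(1,a,0)$, $a\cdot b=p(0,a,b)$ and $a+b=p(a,b,\bar a)$. Then the following conditions are equivalent: (i) $(A,+,\cdot,0,1)$ is a unitary (right) near-ring of characteristic $2$; (ii) $p(a,b,c)=a+(b\cdot(a+c))$ for all $a,b,c\in A$; (iii) $a+a=0$ for all $a\in A$; (iv) $(a+b)\cdot c=(a\cdot c)+(b\cdot c)$ for all $a,b,c\in A$.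
   Context: A unitary (right) near-ring $(A,+,\cdot,0,1)$ is a set $A$ with binary operations $+$ and $\cdot$ such that $(A,+,0)$ is a group (not assumed abelian a priori), $(A,\cdot,1)$ is a monoid, and the right distributive law $(a+b)\cdot c=a\cdot c+b\cdot c$ holds for all $a,b,c$. It has characteristic $2$ if $b+b=0$ for all $b\in A$. *)

theory Defs
  imports Main
begin

definition is_group_op :: "('a \<Rightarrow> 'a \<Rightarrow> 'a) \<Rightarrow> 'a \<Rightarrow> bool" where
  "is_group_op add z \<longleftrightarrow>
     (\<forall>a b c. add (add a b) c = add a (add b c)) \<and>
     (\<forall>a. add z a = a \<and> add a z = a) \<and>
     (\<forall>a. \<exists>b. add a b = z \<and> add b a = z)"

definition is_monoid_op :: "('a \<Rightarrow> 'a \<Rightarrow> 'a) \<Rightarrow> 'a \<Rightarrow> bool" where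
  "is_monoid_op mul u \<longleftrightarrow>
     (\<forall>a b c. mul (mul a b) c = mul a (mul b c)) \<and>
     (\<forall>a. mul u a = a \<and> mul a u = a)"

definition unitary_right_near_ring ::
  "('a \<Rightarrow> 'a \<Rightarrow> 'a) \<Rightarrow> ('a \<Rightarrow> 'a \<Rightarrow> 'a) \<Rightarrow> 'a \<Rightarrow> 'a \<Rightarrow> bool" where
  "unitary_right_near_ring add mul z u \<longleftrightarrow>
     is_group_op add z \<and> is_monoid_op mul u \<and>
     (\<forall>a b c. mul (add a b) c = add (mul a c) (mul b c))"

definition char2 :: "('a \<Rightarrow> 'a \<Rightarrow> 'a) \<Rightarrow> 'a \<Rightarrow> bool" where
  "char2 add z \<longleftrightarrow> (\<forall>b. add b b = z)"

text \<open>Derived operations from the ternary operation p with constants 0 (z) and 1 (u).\<close>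

definition tbar :: "('a \<Rightarrow> 'a \<Rightarrow> 'a \<Rightarrow> 'a) \<Rightarrow> 'a \<Rightarrow> 'a \<Rightarrow> 'a \<Rightarrow> 'a" where
  "tbar p z u a = p u a z"

definition tmul :: "('a \<Rightarrow> 'a \<Rightarrow> 'a \<Rightarrow> 'a) \<Rightarrow> 'a \<Rightarrow> 'a \<Rightarrow> 'a \<Rightarrow> 'a" where
  "tmul p z a b = p z a b"

definition tadd :: "('a \<Rightarrow> 'a \<Rightarrow> 'a \<Rightarrow> 'a) \<Rightarrow> 'a \<Rightarrow> 'a \<Rightarrow> 'a \<Rightarrow> 'a \<Rightarrow> 'a" where
  "tadd p z u a b = p a b (tbar p z u a)"

end

theory Submission
  imports Defs
begin

theorem theorem3:
  fixes p :: "'a \<Rightarrow> 'a \<Rightarrow> 'a \<Rightarrow> 'a" and z u :: 'a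
  assumes T1: "\<And>a. p z a u = a"
    and T2: "\<And>a b. p a b a = a"
    and T3: "\<And>a b1 b2 b3 c. p a (p b1 b2 b3) c = p (p a b1 c) b2 (p a b3 c)"
    and T4: "\<And>a b. p a z b = a \<and> a = p b u a"
  defines "add \<equiv> tadd p z u" and "mul \<equiv> tmul p z"
  shows "((unitary_right_near_ring add mul z u \<and> char2 add z)
           \<longleftrightarrow> (\<forall>a b c. p a b c = add a (mul b (add a c))))
         \<and> ((\<forall>a b c. p a b c = add a (mul b (add a c))) \<longleftrightarrow> (\<forall>a. add a a = z))
         \<and> ((\<forall>a. add a a = z) \<longleftrightarrow> (\<forall>a b c. mul (add a b) c = add (mul a c) (mul b c)))"
proof -
  have F4a: "\<And>a b. p a z b = a" using T4 by blast
  have F4b: "\<And>a b. p b u a = a" using T4 by metis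
  have add_def': "\<And>a b. add a b = p a b (p u a z)" by (simp add: add_def tadd_def tbar_def)
  have mul_def': "\<And>a b. mul a b = p z a b" by (simp add: mul_def tmul_def)
  have swap: "\<And>a b c. p a (p u b z) c = p c b a" using T3 F4a F4b by metis
  have barp: "\<And>x y w. p u (p x y w) z = p (p u x z) y (p u w z)" using T3 by metis
  have barbar: "\<And>a. p u (p u a z) z = a" using T3 F4a F4b T1 by metis
  have bar0: "p u z z = u" using F4a by metis
  have assoc: "\<And>a b c. add (add a b) c = add a (add b c)"
  proof -
    fix a b c
    have "add a (add b c) = p (p a b (p u a z)) c (p a (p u b z) (p u a z))"
      unfolding add_def' using T3 by metis
    also have "\<dots> = p (p a b (p u a z)) c (p (p u a z) b a)" using swap by metis
    also have "\<dots> = add (add a b) c" unfolding add_def' using barp barbar by metis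
    finally show "add (add a b) c = add a (add b c)" by simp
  qed
  have addz: "\<And>a. add z a = a" unfolding add_def' using bar0 T1 F4a by metis
  have addz2: "\<And>a. add a z = a" unfolding add_def' using F4a by metis
  have mon: "is_monoid_op mul u"
    unfolding is_monoid_op_def mul_def' using T3 F4a F4b T1 by metis
  have plus_c_mul: "\<And>a c. add c (mul a c) = p c a (add c c)"
    unfolding add_def' mul_def' using T3 F4a by metis
  have mul_add: "\<And>a b c. mul (add a b) c = p (mul a c) b (p c a z)"
    unfolding add_def' mul_def' using T3 swap by metis
  have add_mul: "\<And>a b c. add (mul a c) (mul b c) = p (mul a c) b (add (mul a c) c)"
    unfolding add_def' mul_def' using T3 F4a by metis
  have iii_ii: "\<forall>a b c. p a b c = add a (mul b (add a c))" if h: "\<forall>a. add a a = z"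
  proof (intro allI)
    fix a b c
    have h1: "p a a (p u a z) = z" using h add_def' by metis
    have h2: "p a (p u a z) (p u a z) = u"
    proof -
      have "p a (p u a z) (p u a z) = p (p u a z) a a" using swap by metis
      also have "\<dots> = p u (p a a (p u a z)) z" using barp barbar by metis
      finally show ?thesis using h1 bar0 by simp
    qed
    have "add a (mul b (add a c)) = p (p a z (p u a z)) b (p a (p a c (p u a z)) (p u a z))"
      unfolding add_def' mul_def' using T3 by metis
    also have "\<dots> = p a b (p (p a a (p u a z)) c (p a (p u a z) (p u a z)))"
      using T3 F4a by metis
    also have "\<dots> = p a b c" using h1 h2 T1 by simp
    finally show "p a b c = add a (mul b (add a c))" by simp
  qed
  have ii_iii: "\<forall>a. add a a = z" if h: "\<forall>a b c. p a b c = add a (mul b (add a c))"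
  proof
    fix a
    have inv: "\<And>c. add a (add a c) = c"
    proof -
      fix c
      have "c = p a u c" using F4b by metis
      also have "\<dots> = add a (add a c)" using h mon unfolding is_monoid_op_def by metis
      finally show "add a (add a c) = c" by simp
    qed
    have e: "add a (add a a) = a" using inv[of a] by simp
    have "add a a = add a (add a (add a a))" using inv by metis
    also have "\<dots> = add a a" using e by simp
    have "add a a = add a (add a (add a a))" using inv by metis
    have "add a (add a a) = add a z" using e addz2 by simp
    hence "add a (add a (add a a)) = add a (add a z)" by simp
    thus "add a a = z" using inv by metis
  qed
  have iii_nr: "unitary_right_near_ring add mul z u \<and> char2 add z" if h: "\<forall>a. add a a = z"
  proof -
    have comm: "\<And>a b. add a b = add b a"
    proof -
      fix a b
      have "add b a = add (add b a) (add (add a b) (add a b))" using h addz2 by metis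
      also have "\<dots> = add b (add (add a a) (add b (add a b)))" using assoc by metis
      also have "\<dots> = add b (add b (add a b))" using h addz by metis
      also have "\<dots> = add a b" using assoc h addz by metis
      finally show "add a b = add b a" by simp
    qed
    have grp: "is_group_op add z"
      unfolding is_group_op_def using assoc addz addz2 h by metis
    have dist: "\<And>a b c. mul (add a b) c = add (mul a c) (mul b c)"
    proof -
      fix a b c
      have "add (mul a c) c = add c (mul a c)" using comm by metis
      also have "\<dots> = p c a z" using plus_c_mul h by metis
      finally show "mul (add a b) c = add (mul a c) (mul b c)" using mul_add add_mul by metis
    qed
    show ?thesis unfolding unitary_right_near_ring_def char2_def
      using grp mon dist h by blast
  qed
  have iv_iii: "\<forall>a. add a a = z" if h: "\<forall>a b c. mul (add a b) c = add (mul a c) (mul b c)"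
  proof
    fix c
    have "\<And>b. p c b z = p c b (add c c)"
    proof -
      fix b
      have "mul (add u b) c = p c b z" using mul_add mul_def' F4b by metis
      moreover have "add (mul u c) (mul b c) = p c b (add c c)"
        using plus_c_mul mul_def' F4b by metis
      ultimately show "p c b z = p c b (add c c)" using h by metis
    qed
    from this[of u] show "add c c = z" using F4b by metis
  qed
  show ?thesis
    using iii_ii ii_iii iii_nr iv_iii
    unfolding char2_def unitary_right_near_ring_def by blast
qed

end
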